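(* Let $1\le t\le n$ and let $M_t$ be the real matrix with rows and columns indexed by the nonempty subsets of $[n]$ of size at most $t$, ordered by nondecreasing size, with $M_t[a,b]=2^{|a\cap b|}$. For $0\le i\le t-1$ let $M_t^{(i)}$ denote the Schur complement $M_t/M_i$ of the upper-left principal submatrix $M_i$ (indexed by the sets of size at most $i$), with $M_t^{(0)}=M_t$; its rows and columns are indexed by the subsets $a\subseteq[n]$ with $i<|a|\le t$. Then for all such $a,b$, $$M_t^{(i)}[a,b]=f^{(i+1)}(|a\cap b|)+u^{(i)}(|a|,|b|),$$ where $f^{(i)}(x)=\sum_{k=i}^x\binom xk=2^x-\sum_{k=0}^{i-1}\binom xk$, $u^{(i)}(w,w')=\binom{w-1}{i}\binom{w'-1}{i}/\alpha_i$, and $\alpha_i=\sum_{k=0}^i\binom nk$.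
   Context: For a block matrix $\begin{pmatrix}A&B\\ C&D'\end{pmatrix}$ with $A$ invertible, the Schur complement of $A$ is $D'-CA^{-1}B$. (For $1\le i$, the submatrix $M_i$ is invertible.) *)

theory Defs
  imports Complex_Main
begin

text \<open>Matrices are represented as real-valued functions of two indices,
  together with an explicit finite index set.  The ordering of rows and columns
  is irrelevant for the entries of a Schur complement.\<close>

definition idx :: "nat \<Rightarrow> nat \<Rightarrow> nat \<Rightarrow> nat set set" where
  "idx n lo hi = {a. a \<subseteq> {1..n} \<and> lo < card a \<and> card a \<le> hi}"

text \<open>The entries of M_t (and of all its principal submatrices M_i).\<close>
definition Mentry :: "nat set \<Rightarrow> nat set \<Rightarrow> real" where
  "Mentry a b = 2 ^ card (a \<inter> b)"

definition inv_on :: "'a set \<Rightarrow> ('a \<Rightarrow> 'a \<Rightarrow> real) \<Rightarrow> ('a \<Rightarrow> 'a \<Rightarrow> real)" where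
  "inv_on I A = (THE B. (\<forall>x\<in>I. \<forall>y\<in>I. (\<Sum>z\<in>I. A x z * B z y) = (if x = y then 1 else 0))
                      \<and> (\<forall>x y. (x \<notin> I \<or> y \<notin> I) \<longrightarrow> B x y = 0))"

text \<open>Schur complement of the principal block indexed by I in the matrix A:
  entry (a,b) of D' - C A_I^{-1} B, for a, b outside I.  For I = {} it is A itself.\<close>
definition schur :: "'a set \<Rightarrow> ('a \<Rightarrow> 'a \<Rightarrow> real) \<Rightarrow> 'a \<Rightarrow> 'a \<Rightarrow> real" where
  "schur I A a b = A a b - (\<Sum>c\<in>I. \<Sum>d\<in>I. A a c * inv_on I A c d * A d b)"

definition f :: "nat \<Rightarrow> nat \<Rightarrow> real" where
  "f i x = (\<Sum>k=i..x. real (x choose k))"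

definition alpha :: "nat \<Rightarrow> nat \<Rightarrow> real" where
  "alpha n i = (\<Sum>k=0..i. real (n choose k))"

definition u :: "nat \<Rightarrow> nat \<Rightarrow> nat \<Rightarrow> nat \<Rightarrow> real" where
  "u n i w w' = real ((w - 1) choose i) * real ((w' - 1) choose i) / alpha n i"

end

theory Submission imports Defs begin

locale gram =
  fixes I :: "'a set" and W V A :: "'a \<Rightarrow> 'a \<Rightarrow> real"
  assumes fin: "finite I"
    and WV: "\<And>c d. c \<in> I \<Longrightarrow> d \<in> I \<Longrightarrow> (\<Sum>e\<in>I. W c e * V e d) = (if c = d then 1 else 0)"
    and VW: "\<And>c d. c \<in> I \<Longrightarrow> d \<in> I \<Longrightarrow> (\<Sum>e\<in>I. V c e * W e d) = (if c = d then 1 else 0)"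
    and Asym: "\<And>x y. A x y = A y x"
    and Aform: "\<And>x c. c \<in> I \<Longrightarrow> A x c = 1 + (\<Sum>e\<in>I. W x e * W c e)"
begin

definition "v e = (\<Sum>d\<in>I. V e d)"
definition "q c = (\<Sum>e\<in>I. v e * V e c)"
definition "\<alpha> = 1 + (\<Sum>e\<in>I. v e * v e)"
definition "G c d = (\<Sum>e\<in>I. V e c * V e d) - q c * q d / \<alpha>"
definition "\<rho> x = (\<Sum>e\<in>I. W x e * v e)"

lemma alpha_pos: "\<alpha> > 0"
proof -
  have "(\<Sum>e\<in>I. v e * v e) \<ge> 0" by (intro sum_nonneg) simp
  then show ?thesis unfolding \<alpha>_def by linarith
qed

lemma L1: "c \<in> I \<Longrightarrow> (\<Sum>e\<in>I. W c e * v e) = 1"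
proof -
  assume c: "c \<in> I"
  have "(\<Sum>e\<in>I. W c e * v e) = (\<Sum>d\<in>I. \<Sum>e\<in>I. W c e * V e d)"
    unfolding v_def sum_distrib_left by (rule sum.swap)
  also have "\<dots> = (\<Sum>d\<in>I. if c = d then 1 else 0)" using WV c by simp
  also have "\<dots> = 1" using c fin by simp
  finally show ?thesis .
qed

lemma L2: "e \<in> I \<Longrightarrow> (\<Sum>d\<in>I. W d e * q d) = v e"
proof -
  assume e: "e \<in> I"
  have "(\<Sum>d\<in>I. W d e * q d) = (\<Sum>e'\<in>I. v e' * (\<Sum>d\<in>I. V e' d * W d e))"
    unfolding q_def sum_distrib_left by (subst sum.swap) (simp add: algebra_simps)
  also have "\<dots> = (\<Sum>e'\<in>I. v e' * (if e' = e then 1 else 0))" using VW e by simp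
  also have "\<dots> = v e" using e fin by (simp add: if_distrib cong: if_cong)
  finally show ?thesis .
qed

lemma L3: "(\<Sum>d\<in>I. q d) = \<alpha> - 1"
  unfolding q_def \<alpha>_def v_def[of _] 
  by (subst sum.swap) (simp add: sum_distrib_left[symmetric] v_def[symmetric])

lemma L4: "e \<in> I \<Longrightarrow> c' \<in> I \<Longrightarrow> (\<Sum>d\<in>I. W d e * G d c') = V e c' - v e * q c' / \<alpha>"
proof -
  assume e: "e \<in> I" and c': "c' \<in> I"
  have "(\<Sum>d\<in>I. W d e * G d c') = (\<Sum>d\<in>I. W d e * (\<Sum>e'\<in>I. V e' d * V e' c')) - (\<Sum>d\<in>I. W d e * q d) * q c' / \<alpha>"
    unfolding G_def by (simp add: right_diff_distrib sum_subtractf sum_distrib_right sum_divide_distrib mult.assoc)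
  also have "(\<Sum>d\<in>I. W d e * (\<Sum>e'\<in>I. V e' d * V e' c')) = (\<Sum>e'\<in>I. V e' c' * (\<Sum>d\<in>I. V e' d * W d e))"
    unfolding sum_distrib_left by (subst sum.swap) (simp add: algebra_simps)
  also have "\<dots> = (\<Sum>e'\<in>I. V e' c' * (if e' = e then 1 else 0))" using VW e by simp
  also have "\<dots> = V e c'" using e fin by (simp add: if_distrib cong: if_cong)
  finally show ?thesis using L2[OF e] by simp
qed

lemma L5: "(\<Sum>d\<in>I. G d c') = q c' / \<alpha>"
proof -
  have "(\<Sum>d\<in>I. G d c') = (\<Sum>d\<in>I. \<Sum>e\<in>I. V e d * V e c') - (\<Sum>d\<in>I. q d) * q c' / \<alpha>"
    unfolding G_def by (simp add: sum_subtractf sum_distrib_right sum_divide_distrib)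
  also have "(\<Sum>d\<in>I. \<Sum>e\<in>I. V e d * V e c') = q c'"
    unfolding q_def v_def by (subst sum.swap) (simp add: sum_distrib_right)
  finally show ?thesis using L3 alpha_pos by (simp add: field_simps)
qed

lemma L7: "d \<in> I \<Longrightarrow> (\<Sum>c\<in>I. A x c * G c d) = q d / \<alpha> + (\<Sum>e\<in>I. W x e * (V e d - v e * q d / \<alpha>))"
proof -
  assume d: "d \<in> I"
  have "(\<Sum>c\<in>I. A x c * G c d) = (\<Sum>c\<in>I. G c d + (\<Sum>e\<in>I. W x e * (W c e * G c d)))"
    using Aform by (intro sum.cong) (simp_all add: algebra_simps sum_distrib_right sum_distrib_left)
  also have "\<dots> = (\<Sum>c\<in>I. G c d) + (\<Sum>e\<in>I. W x e * (\<Sum>c\<in>I. W c e * G c d))"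
    by (simp add: sum.distrib sum_distrib_left) (rule sum.swap)
  also have "\<dots> = q d / \<alpha> + (\<Sum>e\<in>I. W x e * (V e d - v e * q d / \<alpha>))"
    using L4 d L5 by simp
  finally show ?thesis .
qed

lemma L6: "c \<in> I \<Longrightarrow> d \<in> I \<Longrightarrow> (\<Sum>c'\<in>I. A c c' * G c' d) = (if c = d then 1 else 0)"
proof -
  assume c: "c \<in> I" and d: "d \<in> I"
  have "(\<Sum>e\<in>I. W c e * (V e d - v e * q d / \<alpha>)) = (\<Sum>e\<in>I. W c e * V e d) - (\<Sum>e\<in>I. W c e * v e) * q d / \<alpha>"
    by (simp add: right_diff_distrib sum_subtractf sum_distrib_right sum_divide_distrib mult.assoc)
  then show ?thesis using L7[OF d, of c] L1[OF c] WV[OF c d] by simp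
qed

lemma Gsym: "G c d = G d c"
  unfolding G_def by (simp add: mult.commute)

lemma L9: "c \<in> I \<Longrightarrow> x \<in> I \<Longrightarrow> (\<Sum>y\<in>I. G c y * A y x) = (if c = x then 1 else 0)"
  using L6[of x c] by (simp add: Gsym Asym mult.commute eq_commute)

definition "G0 c d = (if c \<in> I \<and> d \<in> I then G c d else 0)"

lemma inv_eq: "inv_on I A = G0"
  unfolding inv_on_def
proof (rule the_equality)
  show "(\<forall>x\<in>I. \<forall>y\<in>I. (\<Sum>z\<in>I. A x z * G0 z y) = (if x = y then 1 else 0)) \<and>
    (\<forall>x y. x \<notin> I \<or> y \<notin> I \<longrightarrow> G0 x y = 0)"
    using L6 by (simp add: G0_def cong: sum.cong)
next
  fix B assume B: "(\<forall>x\<in>I. \<forall>y\<in>I. (\<Sum>z\<in>I. A x z * B z y) = (if x = y then 1 else 0)) \<and>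
    (\<forall>x y. x \<notin> I \<or> y \<notin> I \<longrightarrow> B x y = 0)"
  show "B = G0"
  proof (intro ext)
    fix c d
    show "B c d = G0 c d"
    proof (cases "c \<in> I \<and> d \<in> I")
      case True
      then have "G c d = (\<Sum>x\<in>I. G c x * (if x = d then 1 else 0))" using fin by (simp add: if_distrib cong: if_cong)
      also have "\<dots> = (\<Sum>x\<in>I. G c x * (\<Sum>y\<in>I. A x y * B y d))" using B True by (intro sum.cong) auto
      also have "\<dots> = (\<Sum>y\<in>I. (\<Sum>x\<in>I. G c x * A x y) * B y d)"
        by (simp add: sum_distrib_left sum_distrib_right mult.assoc) (rule sum.swap)
      also have "\<dots> = (\<Sum>y\<in>I. (if c = y then 1 else 0) * B y d)" using L9 True by simp
      also have "\<dots> = (\<Sum>y\<in>I. (if c = y then B y d else 0))" by (intro sum.cong) auto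
      also have "\<dots> = B c d" using True fin by simp
      finally show ?thesis using True by (simp add: G0_def)
    next
      case False then show ?thesis using B by (auto simp: G0_def)
    qed
  qed
qed

lemma L8: "(\<Sum>c\<in>I. \<Sum>d\<in>I. A a c * inv_on I A c d * A d b)
   = (\<Sum>e\<in>I. W a e * W b e) + 1 - (1 - \<rho> a) * (1 - \<rho> b) / \<alpha>"
proof -
  define H where "H d = q d / \<alpha> + (\<Sum>e\<in>I. W a e * (V e d - v e * q d / \<alpha>))" for d
  have "(\<Sum>c\<in>I. \<Sum>d\<in>I. A a c * inv_on I A c d * A d b) = (\<Sum>d\<in>I. (\<Sum>c\<in>I. A a c * G c d) * A d b)"
    unfolding inv_eq by (subst sum.swap) (simp add: G0_def sum_distrib_right cong: sum.cong)
  also have "\<dots> = (\<Sum>d\<in>I. H d * A d b)" using L7 unfolding H_def by simp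
  also have "\<dots> = (\<Sum>d\<in>I. H d + (\<Sum>e'\<in>I. W b e' * (H d * W d e')))"
    using Aform by (intro sum.cong) (simp_all add: Asym[of _ b] algebra_simps sum_distrib_left)
  also have "\<dots> = (\<Sum>d\<in>I. H d) + (\<Sum>e'\<in>I. W b e' * (\<Sum>d\<in>I. H d * W d e'))"
    by (simp add: sum.distrib sum_distrib_left) (rule sum.swap)
  also have "(\<Sum>d\<in>I. H d) = (\<alpha> - 1) / \<alpha> + \<rho> a / \<alpha>"
  proof -
    have "(\<Sum>d\<in>I. H d) = (\<Sum>d\<in>I. q d) / \<alpha> + (\<Sum>e\<in>I. W a e * ((\<Sum>d\<in>I. V e d) - v e * (\<Sum>d\<in>I. q d) / \<alpha>))"
      unfolding H_def by (simp add: sum.distrib sum_divide_distrib[symmetric] sum_distrib_left sum_subtractf right_diff_distrib)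
          (subst sum.swap, simp add: sum_distrib_right sum_divide_distrib, rule sum.swap)
    also have "\<dots> = (\<alpha> - 1) / \<alpha> + (\<Sum>e\<in>I. W a e * v e * (1 / \<alpha>))"
      using alpha_pos by (simp add: L3 v_def[symmetric] field_simps)
    finally show ?thesis by (simp add: \<rho>_def sum_divide_distrib)
  qed
  also have "(\<Sum>e'\<in>I. W b e' * (\<Sum>d\<in>I. H d * W d e')) = (\<Sum>e'\<in>I. W b e' * (v e' / \<alpha> + W a e' - \<rho> a * v e' / \<alpha>))"
  proof (intro sum.cong refl)
    fix e' assume e': "e' \<in> I"
    have "(\<Sum>d\<in>I. H d * W d e') = (\<Sum>d\<in>I. W d e' * q d) / \<alpha> + (\<Sum>e\<in>I. W a e * ((\<Sum>d\<in>I. V e d * W d e') - v e * (\<Sum>d\<in>I. W d e' * q d) / \<alpha>))"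
      unfolding H_def by (simp add: algebra_simps sum.distrib sum_divide_distrib[symmetric] sum_distrib_left sum_subtractf)
          (subst sum.swap, simp add: sum_distrib_right sum_divide_distrib algebra_simps, rule sum.swap)
    also have "\<dots> = v e' / \<alpha> + (\<Sum>e\<in>I. W a e * ((if e = e' then 1 else 0) - v e * v e' / \<alpha>))"
      using L2[OF e'] VW e' by simp
    also have "\<dots> = v e' / \<alpha> + W a e' - \<rho> a * v e' / \<alpha>"
    proof -
      have "(\<Sum>e\<in>I. W a e * ((if e = e' then 1 else 0) - v e * v e' / \<alpha>)) = (\<Sum>e\<in>I. (if e = e' then W a e else 0) - W a e * v e * (v e' / \<alpha>))"
        by (intro sum.cong) (auto simp: algebra_simps)
      also have "\<dots> = W a e' - \<rho> a * (v e' / \<alpha>)"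
        using e' fin by (simp add: sum_subtractf \<rho>_def sum_distrib_right sum_divide_distrib)
      finally show ?thesis by simp
    qed
    finally show "W b e' * (\<Sum>d\<in>I. H d * W d e') = W b e' * (v e' / \<alpha> + W a e' - \<rho> a * v e' / \<alpha>)" by simp
  qed
  also have "\<dots> = \<rho> b / \<alpha> + (\<Sum>e\<in>I. W a e * W b e) - \<rho> a * \<rho> b / \<alpha>"
    by (simp add: algebra_simps sum.distrib sum_subtractf \<rho>_def sum_divide_distrib sum_distrib_left)
  finally have X: "(\<Sum>c\<in>I. \<Sum>d\<in>I. A a c * inv_on I A c d * A d b) = (\<alpha> - 1) / \<alpha> + \<rho> a / \<alpha> + (\<rho> b / \<alpha> + (\<Sum>e\<in>I. W a e * W b e) - \<rho> a * \<rho> b / \<alpha>)" .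
  have "(1 - \<rho> a) * (1 - \<rho> b) / \<alpha> = 1 / \<alpha> - \<rho> a / \<alpha> - \<rho> b / \<alpha> + \<rho> a * \<rho> b / \<alpha>"
    using alpha_pos by (simp add: field_simps)
  moreover have "(\<alpha> - 1) / \<alpha> = 1 - 1 / \<alpha>" using alpha_pos by (simp add: field_simps)
  ultimately show ?thesis using X by linarith
qed

end

definition Wz :: "nat set \<Rightarrow> nat set \<Rightarrow> real" where
  "Wz x e = (if e \<subseteq> x then 1 else 0)"
definition Vz :: "nat set \<Rightarrow> nat set \<Rightarrow> real" where
  "Vz e d = (if d \<subseteq> e then (-1) ^ (card e - card d) else 0)"

lemma neg1_pow_diff: "b \<le> a \<Longrightarrow> ((-1::real) ^ (a - b)) = (-1) ^ a * (-1) ^ b"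
proof -
  assume "b \<le> a"
  then have "(-1::real) ^ a = (-1) ^ (a - b) * (-1) ^ b" by (simp flip: power_add)
  then have "(-1::real) ^ a * (-1) ^ b = (-1) ^ (a - b) * ((-1) ^ b * (-1) ^ b)" by simp
  also have "(-1::real) ^ b * (-1) ^ b = 1" by (simp flip: power_add)
  finally show ?thesis by simp
qed

lemma mobius:
  assumes "finite c" "d \<subseteq> c"
  shows "(\<Sum>e | d \<subseteq> e \<and> e \<subseteq> c. ((-1::real) ^ (card e - card d))) = (if c = d then 1 else 0)"
proof (cases "c = d")
  case True
  then have "{e. d \<subseteq> e \<and> e \<subseteq> c} = {d}" by auto
  then show ?thesis using True by simp
next
  case False
  then have sub: "d \<subset> c" using assms by auto
  have fin: "finite {e. d \<subseteq> e \<and> e \<subseteq> c}" using assms(1) by (rule finite_subset[rotated, OF finite_Pow_iff[THEN iffD2]]) auto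
  have "(\<Sum>e | d \<subseteq> e \<and> e \<subseteq> c. ((-1::real) ^ (card e - card d)))
      = (\<Sum>e | d \<subseteq> e \<and> e \<subseteq> c. (-1::real) ^ card e) * (-1) ^ card d"
    unfolding sum_distrib_right
    by (intro sum.cong refl neg1_pow_diff card_mono) (use assms in \<open>auto intro: finite_subset\<close>)
  also have "(\<Sum>e | d \<subseteq> e \<and> e \<subseteq> c. (-1::real) ^ card e) = 0"
  proof (rule sum_alternating_cancels[OF fin])
    have "card {T. T \<subseteq> c \<and> d \<subseteq> T \<and> even (card T)} = card {T. T \<subseteq> c \<and> d \<subseteq> T \<and> odd (card T)}"
      by (rule card_subsupersets_even_odd[OF assms(1) sub])
    then show "card {x \<in> {e. d \<subseteq> e \<and> e \<subseteq> c}. even (card x)} = card {x \<in> {e. d \<subseteq> e \<and> e \<subseteq> c}. odd (card x)}"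
      by (simp add: conj_commute conj_left_commute)
  qed
  finally show ?thesis using False by simp
qed

lemma idx_finite: "finite (idx n lo hi)"
  unfolding idx_def by (rule finite_subset[of _ "Pow {1..n}"]) auto

lemma idx_sub: "c \<in> idx n 0 i \<Longrightarrow> d \<noteq> {} \<Longrightarrow> d \<subseteq> c \<Longrightarrow> d \<in> idx n 0 i"
  unfolding idx_def using card_mono[of c d] by (auto intro: finite_subset card_gt_0_iff[THEN iffD2] simp: finite_subset)

lemma idx_props: "c \<in> idx n 0 i \<Longrightarrow> finite c \<and> c \<noteq> {} \<and> c \<subseteq> {1..n} \<and> card c \<le> i"
  unfolding idx_def by (auto intro: finite_subset)

lemma WV_core: assumes c: "c \<in> idx n 0 i" and d: "d \<in> idx n 0 i"
  shows "(\<Sum>e\<in>idx n 0 i. if d \<subseteq> e \<and> e \<subseteq> c then (-1::real) ^ (card e - card d) else 0) = (if c = d then 1 else 0)"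
proof -
  have "(\<Sum>e\<in>idx n 0 i. if d \<subseteq> e \<and> e \<subseteq> c then (-1::real) ^ (card e - card d) else 0)
     = (\<Sum>e\<in>{e \<in> idx n 0 i. d \<subseteq> e \<and> e \<subseteq> c}. (-1::real) ^ (card e - card d))"
    by (simp add: sum.inter_filter idx_finite)
  also have "{e \<in> idx n 0 i. d \<subseteq> e \<and> e \<subseteq> c} = {e. d \<subseteq> e \<and> e \<subseteq> c}"
    using idx_sub[OF c] idx_props[OF d] by auto
  also have "(\<Sum>e\<in>{e. d \<subseteq> e \<and> e \<subseteq> c}. (-1::real) ^ (card e - card d)) = (if c = d then 1 else 0)"
  proof (cases "d \<subseteq> c")
    case True then show ?thesis using mobius idx_props[OF c] by blast
  next
    case False then have e: "{e. d \<subseteq> e \<and> e \<subseteq> c} = {}" by auto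
    have "c \<noteq> d" using False by auto
    then show ?thesis by (simp only: e sum.empty) simp
  qed
  finally show ?thesis .
qed

lemma WV_z: assumes c: "c \<in> idx n 0 i" and d: "d \<in> idx n 0 i"
  shows "(\<Sum>e\<in>idx n 0 i. Wz c e * Vz e d) = (if c = d then 1 else 0)"
proof -
  have "(\<Sum>e\<in>idx n 0 i. Wz c e * Vz e d) = (\<Sum>e\<in>idx n 0 i. if d \<subseteq> e \<and> e \<subseteq> c then (-1::real) ^ (card e - card d) else 0)"
    by (intro sum.cong) (auto simp: Wz_def Vz_def)
  then show ?thesis using WV_core[OF c d] by simp
qed

lemma VW_z: assumes c: "c \<in> idx n 0 i" and d: "d \<in> idx n 0 i"
  shows "(\<Sum>e\<in>idx n 0 i. Vz c e * Wz e d) = (if c = d then 1 else 0)"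
proof -
  have "(\<Sum>e\<in>idx n 0 i. Vz c e * Wz e d) = (\<Sum>e\<in>idx n 0 i. if d \<subseteq> e \<and> e \<subseteq> c then (-1::real) ^ (card c - card d) * (-1::real) ^ (card e - card d) else 0)"
  proof (intro sum.cong refl)
    fix e assume "e \<in> idx n 0 i"
    show "Vz c e * Wz e d = (if d \<subseteq> e \<and> e \<subseteq> c then (-1::real) ^ (card c - card d) * (-1::real) ^ (card e - card d) else 0)"
    proof (cases "d \<subseteq> e \<and> e \<subseteq> c")
      case True
      have f: "finite c" using idx_props[OF c] by simp
      have "card d \<le> card e" "card e \<le> card c" using True f by (auto intro: card_mono finite_subset)
      then have "(-1::real) ^ (card c - card d) * (-1::real) ^ (card e - card d) = (-1::real) ^ (card c - card e)"
        by (simp add: neg1_pow_diff)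
      then show ?thesis using True by (simp add: Vz_def Wz_def)
    qed (auto simp: Vz_def Wz_def)
  qed
  also have "\<dots> = (-1::real) ^ (card c - card d) * (\<Sum>e\<in>idx n 0 i. if d \<subseteq> e \<and> e \<subseteq> c then (-1::real) ^ (card e - card d) else 0)"
    by (simp add: sum_distrib_left if_distrib cong: if_cong)
  also have "(\<Sum>e\<in>idx n 0 i. if d \<subseteq> e \<and> e \<subseteq> c then (-1::real) ^ (card e - card d) else 0) = (if c = d then 1 else 0)"
    by (rule WV_core[OF c d])
  finally show ?thesis by simp
qed


lemma B1: "(\<Sum>k=0..i. (-1::real)^k * real (Suc m choose k)) = (-1)^i * real (m choose i)"
proof (induction i)
  case 0 then show ?case by simp
next
  case (Suc i)
  have "(\<Sum>k=0..Suc i. (-1::real)^k * real (Suc m choose k)) = (-1)^i * real (m choose i) + (-1)^Suc i * real (Suc m choose Suc i)"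
    using Suc by simp
  also have "real (Suc m choose Suc i) = real (m choose i) + real (m choose Suc i)" by simp
  finally show ?case by (simp add: algebra_simps)
qed

lemma B2: "(\<Sum>k=0..i. x choose k) + (\<Sum>k=Suc i..x. x choose k) = 2^x"
proof (cases "x \<le> i")
  case True
  have "(\<Sum>k=0..i. x choose k) = (\<Sum>k\<in>{..x}. x choose k)"
    by (rule sum.mono_neutral_right) (use True in auto)
  then show ?thesis using True choose_row_sum[of x] by simp
next
  case False
  then obtain p where p: "x = i + p" by (metis le_add_diff_inverse nat_le_linear)
  have "(\<Sum>k=0..i + p. x choose k) = (\<Sum>k=0..i. x choose k) + (\<Sum>k=i+1..i+p. x choose k)"
    by (rule sum.ub_add_nat) simp
  then show ?thesis using choose_row_sum[of x] p by (simp add: atLeast0AtMost)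
qed

lemma Aform_z: assumes c: "c \<in> idx n 0 i"
  shows "Mentry x c = 1 + (\<Sum>e\<in>idx n 0 i. Wz x e * Wz c e)"
proof -
  have fc: "finite (x \<inter> c)" using idx_props[OF c] by simp
  have "(\<Sum>e\<in>idx n 0 i. Wz x e * Wz c e) = (\<Sum>e\<in>idx n 0 i. if e \<subseteq> x \<inter> c then 1 else 0)"
    by (intro sum.cong) (auto simp: Wz_def)
  also have "\<dots> = (\<Sum>e\<in>{e \<in> idx n 0 i. e \<subseteq> x \<inter> c}. 1)"
    by (rule sum.inter_filter[OF idx_finite, symmetric])
  also have "{e \<in> idx n 0 i. e \<subseteq> x \<inter> c} = Pow (x \<inter> c) - {{}}"
    using idx_sub[OF c] idx_props by auto
  also have "(\<Sum>e\<in>Pow (x \<inter> c) - {{}}. (1::real)) = real (2 ^ card (x \<inter> c) - 1)"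
    using fc by (simp add: card_Pow card_Diff_singleton del: Pow_Int_eq)
  finally show ?thesis
    by (simp add: Mentry_def of_nat_diff)
qed

lemma K1: assumes X: "X \<subseteq> {1..n}"
  shows "(\<Sum>e\<in>idx n 0 i. Wz X e * g (card e)) = (\<Sum>k=1..i. real (card X choose k) * g k)"
proof -
  have fX: "finite X" using X by (rule finite_subset) simp
  let ?S = "{e. e \<subseteq> X \<and> card e \<in> {1..i}}"
  have "(\<Sum>e\<in>idx n 0 i. Wz X e * g (card e)) = (\<Sum>e\<in>idx n 0 i. if e \<subseteq> X then g (card e) else 0)"
    by (intro sum.cong) (auto simp: Wz_def)
  also have "\<dots> = (\<Sum>e\<in>{e \<in> idx n 0 i. e \<subseteq> X}. g (card e))"
    by (simp add: sum.inter_filter idx_finite)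
  also have "{e \<in> idx n 0 i. e \<subseteq> X} = ?S"
    using X unfolding idx_def by auto
  also have "(\<Sum>e\<in>?S. g (card e)) = (\<Sum>k\<in>{1..i}. \<Sum>e\<in>{x. x \<in> ?S \<and> card x = k}. g (card e))"
    by (rule sum.group[symmetric]) (use fX in \<open>auto intro: finite_subset[of _ "Pow X"]\<close>)
  also have "\<dots> = (\<Sum>k=1..i. real (card X choose k) * g k)"
  proof (intro sum.cong refl)
    fix k assume k: "k \<in> {1..i}"
    have "{x. x \<in> ?S \<and> card x = k} = {B. B \<subseteq> X \<and> card B = k}" using k by auto
    then have "(\<Sum>e\<in>{x. x \<in> ?S \<and> card x = k}. g (card e)) = (\<Sum>e\<in>{B. B \<subseteq> X \<and> card B = k}. g k)"
      by simp
    also have "\<dots> = real (card X choose k) * g k" using n_subsets[OF fX, of k] by simp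
    finally show "(\<Sum>e\<in>{x. x \<in> ?S \<and> card x = k}. g (card e)) = real (card X choose k) * g k" .
  qed
  finally show ?thesis .
qed

lemma v_z: assumes e: "e \<in> idx n 0 i"
  shows "(\<Sum>d\<in>idx n 0 i. Vz e d) = - ((-1::real) ^ card e)"
proof -
  have fe: "finite e" and ne: "e \<noteq> {}" using idx_props[OF e] by auto
  have "(\<Sum>d\<in>idx n 0 i. Vz e d) = (\<Sum>d\<in>idx n 0 i. if d \<subseteq> e then (-1::real) ^ (card e - card d) else 0)"
    by (simp add: Vz_def)
  also have "\<dots> = (\<Sum>d\<in>{d \<in> idx n 0 i. d \<subseteq> e}. (-1::real) ^ (card e - card d))"
    by (simp add: sum.inter_filter idx_finite)
  also have "{d \<in> idx n 0 i. d \<subseteq> e} = {d. {} \<subseteq> d \<and> d \<subseteq> e} - {{}}"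
    using idx_sub[OF e] idx_props by auto
  also have "(\<Sum>d\<in>{d. {} \<subseteq> d \<and> d \<subseteq> e} - {{}}. (-1::real) ^ (card e - card d))
     = (\<Sum>d\<in>{d. {} \<subseteq> d \<and> d \<subseteq> e}. (-1::real) ^ (card e - card d)) - (-1) ^ card e"
    by (subst sum_diff1) (use fe in auto)
  also have "(\<Sum>d\<in>{d. {} \<subseteq> d \<and> d \<subseteq> e}. (-1::real) ^ (card e - card d))
     = (\<Sum>d\<in>{d. {} \<subseteq> d \<and> d \<subseteq> e}. (-1::real) ^ card e * (-1) ^ (card d - card ({}::nat set)))"
    by (intro sum.cong refl) (simp add: neg1_pow_diff card_mono fe)
  also have "\<dots> = (-1::real) ^ card e * (\<Sum>d\<in>{d. {} \<subseteq> d \<and> d \<subseteq> e}. (-1) ^ (card d - card ({}::nat set)))"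
    by (simp add: sum_distrib_left)
  also have "(\<Sum>d\<in>{d. {} \<subseteq> d \<and> d \<subseteq> e}. (-1::real) ^ (card d - card ({}::nat set))) = 0"
    using mobius[OF fe, of "{}"] ne by simp
  finally show ?thesis by simp
qed


theorem lemma9:
  fixes n t i :: nat and a b :: "nat set"
  assumes "1 \<le> t" and "t \<le> n" and "i \<le> t - 1"
    and "a \<in> idx n i t" and "b \<in> idx n i t"
  shows "schur (idx n 0 i) Mentry a b
           = f (i + 1) (card (a \<inter> b)) + u n i (card a) (card b)"
proof -
  let ?I = "idx n 0 i"
  interpret g: gram ?I Wz Vz Mentry
    by unfold_locales (auto simp: idx_finite WV_z VW_z Aform_z[symmetric] Mentry_def Int_commute)
  have aI: "a \<subseteq> {1..n}" "i < card a" and bI: "b \<subseteq> {1..n}" "i < card b"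
    using assms(4,5) unfolding idx_def by auto
  have v: "e \<in> ?I \<Longrightarrow> g.v e = - ((-1) ^ card e)" for e
    unfolding g.v_def by (rule v_z)
  have alpha: "g.\<alpha> = alpha n i"
  proof -
    have "(\<Sum>e\<in>?I. g.v e * g.v e) = (\<Sum>e\<in>?I. Wz {1..n} e * (\<lambda>k. 1) (card e))"
    proof (intro sum.cong refl)
      fix e assume e: "e \<in> ?I"
      have "g.v e * g.v e = ((-1) ^ card e) * ((-1) ^ card e)" using v[OF e] by simp
      also have "\<dots> = 1" by (simp flip: power_add)
      finally show "g.v e * g.v e = Wz {1..n} e * (\<lambda>k. 1) (card e)"
        using idx_props[OF e] by (simp add: Wz_def)
    qed
    also have "\<dots> = (\<Sum>k=1..i. real (n choose k))" using K1[where X="{1..n}" and g="\<lambda>k. 1"] by simp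
    finally have "g.\<alpha> = 1 + (\<Sum>k=1..i. real (n choose k))" unfolding g.\<alpha>_def by simp
    also have "\<dots> = alpha n i" unfolding alpha_def by (simp add: sum.atLeast_Suc_atMost)
    finally show ?thesis .
  qed
  have rho: "1 - g.\<rho> x = (-1) ^ i * real ((card x - 1) choose i)" if x: "x \<subseteq> {1..n}" "i < card x" for x
  proof -
    have "g.\<rho> x = (\<Sum>e\<in>?I. Wz x e * (\<lambda>k. - ((-1) ^ k)) (card e))"
      unfolding g.\<rho>_def by (intro sum.cong refl) (simp add: v)
    also have "\<dots> = (\<Sum>k=1..i. real (card x choose k) * (- ((-1) ^ k)))" by (rule K1[OF x(1)])
    finally have "1 - g.\<rho> x = 1 + (\<Sum>k=1..i. (-1) ^ k * real (card x choose k))"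
      by (simp add: sum_negf algebra_simps)
    also have "\<dots> = (\<Sum>k=0..i. (-1) ^ k * real (card x choose k))"
      by (simp add: sum.atLeast_Suc_atMost)
    also have "\<dots> = (-1) ^ i * real ((card x - 1) choose i)"
      using B1[where i=i and m="card x - 1"] x(2) by simp
    finally show ?thesis .
  qed
  have RR: "(\<Sum>e\<in>?I. Wz a e * Wz b e) = (\<Sum>k=1..i. real (card (a \<inter> b) choose k))"
  proof -
    have "(\<Sum>e\<in>?I. Wz a e * Wz b e) = (\<Sum>e\<in>?I. Wz (a \<inter> b) e * (\<lambda>k. 1) (card e))"
      by (intro sum.cong refl) (auto simp: Wz_def)
    also have "\<dots> = (\<Sum>k=1..i. real (card (a \<inter> b) choose k))"
      using K1[where X="a \<inter> b" and g="\<lambda>k. 1"] aI by auto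
    finally show ?thesis .
  qed
  have B2r: "(2::real) ^ card (a \<inter> b) = 1 + (\<Sum>k=1..i. real (card (a \<inter> b) choose k)) + f (i + 1) (card (a \<inter> b))"
  proof -
    have "real (2 ^ card (a \<inter> b)) = real ((\<Sum>k=0..i. card (a \<inter> b) choose k) + (\<Sum>k=Suc i..card (a \<inter> b). card (a \<inter> b) choose k))"
      using B2 by metis
    then show ?thesis unfolding f_def by (simp add: sum.atLeast_Suc_atMost of_nat_sum)
  qed
  have "schur ?I Mentry a b = Mentry a b - ((\<Sum>e\<in>?I. Wz a e * Wz b e) + 1 - (1 - g.\<rho> a) * (1 - g.\<rho> b) / g.\<alpha>)"
    unfolding schur_def g.L8 ..
  also have "\<dots> = f (i + 1) (card (a \<inter> b)) + u n i (card a) (card b)"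
    unfolding rho[OF aI] rho[OF bI] alpha RR Mentry_def B2r u_def
    by (simp add: algebra_simps flip: power_add)
  finally show ?thesis .
qed

end
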